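(* For every $n\geq 1$, $M\geq 2$ and $\Upsilon>0$, $$\epsilon_{\mathrm{m}}^{\star}(n,M,\Upsilon)\;\geq\;\epsilon_{\mathrm{e}}^{\star}\Bigl(n+1,M,\tfrac{n\Upsilon}{n+1}\Bigr).$$
   Context: AWGN channel with noise variance $\sigma^2>0$: for input $\mathbf{x}\in\mathbb{R}^n$ the output $\mathbf{y}\in\mathbb{R}^n$ has density $w(\mathbf{y}|\mathbf{x})=\prod_{i=1}^n\varphi_{x_i,\sigma}(y_i)$, where $\varphi_{\mu,\sigma}(y)=\frac{1}{\sqrt{2\pi}\sigma}e^{-(y-\mu)^2/(2\sigma^2)}$. A codebook is $\mathcal{C}=\{\mathbf{c}_1,\dots,\mathbf{c}_M\}\subset\mathbb{R}^n$; a message $V$ uniform on $\{1,\dots,M\}$ is sent as $\mathbf{c}_V$, and the receiver uses maximum-likelihood decoding to produce $\hat V$; $P_e(\mathcal{C})=\Pr\{\hat V\neq V\}$ is the average error probability. Power-constrained families: $\mathcal{F}_{\mathrm{e}}(n,M,\Upsilon)=\{\mathcal{C}:\|\mathbf{c}_i\|^2=n\Upsilon\ \forall i\}$ (equal), $\mathcal{F}_{\mathrm{m}}(n,M,\Upsilon)=\{\mathcal{C}:\|\mathbf{c}_i\|^2\le n\Upsilon\ \forall i\}$ (maximal), $\mathcal{F}_{\mathrm{a}}(n,M,\Upsilon)=\{\mathcal{C}:\frac1M\sum_i\|\mathbf{c}_i\|^2\le n\Upsilon\}$ (average). For $i\in\{\mathrm{e},\mathrm{m},\mathrm{a}\}$,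 $\epsilon_i^{\star}(n,M,\Upsilon)=\inf_{\mathcal{C}\in\mathcal{F}_i(n,M,\Upsilon)}P_e(\mathcal{C})$ (with $\sigma^2$ fixed). *)

theory Defs
  imports "HOL-Analysis.Analysis"
begin

text \<open>Vectors in R^n are represented as functions nat => real, only the coordinates
  i < n being relevant; a codebook of size M is a function c :: nat => (nat => real),
  where c v (v < M) is the codeword of message v (messages indexed 0..M-1).\<close>

definition gauss_pdf :: "real \<Rightarrow> real \<Rightarrow> real \<Rightarrow> real" where
  "gauss_pdf \<mu> \<sigma> y = exp (- ((y - \<mu>)^2) / (2 * \<sigma>^2)) / (sqrt (2 * pi) * \<sigma>)"

definition awgn_density :: "real \<Rightarrow> nat \<Rightarrow> (nat \<Rightarrow> real) \<Rightarrow> (nat \<Rightarrow> real) \<Rightarrow> real" where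
  "awgn_density \<sigma> n x y = (\<Prod>i<n. gauss_pdf (x i) \<sigma> (y i))"

definition ml_decoder :: "real \<Rightarrow> nat \<Rightarrow> nat \<Rightarrow> (nat \<Rightarrow> nat \<Rightarrow> real) \<Rightarrow> (nat \<Rightarrow> real) \<Rightarrow> nat" where
  "ml_decoder \<sigma> n M c y =
     (LEAST v. v < M \<and> (\<forall>u<M. awgn_density \<sigma> n (c u) y \<le> awgn_density \<sigma> n (c v) y))"

definition error_prob :: "real \<Rightarrow> nat \<Rightarrow> nat \<Rightarrow> (nat \<Rightarrow> nat \<Rightarrow> real) \<Rightarrow> real" where
  "error_prob \<sigma> n M c =
     (\<Sum>v<M. LINT y | PiM {..<n} (\<lambda>_. lborel).
        (if ml_decoder \<sigma> n M c y \<noteq> v then 1 else 0) * awgn_density \<sigma> n (c v) y) / real M"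

definition sqnorm :: "nat \<Rightarrow> (nat \<Rightarrow> real) \<Rightarrow> real" where
  "sqnorm n x = (\<Sum>i<n. (x i)^2)"

definition equal_power_codes :: "nat \<Rightarrow> nat \<Rightarrow> real \<Rightarrow> (nat \<Rightarrow> nat \<Rightarrow> real) set" where
  "equal_power_codes n M \<Upsilon> = {c. \<forall>v<M. sqnorm n (c v) = real n * \<Upsilon>}"

definition max_power_codes :: "nat \<Rightarrow> nat \<Rightarrow> real \<Rightarrow> (nat \<Rightarrow> nat \<Rightarrow> real) set" where
  "max_power_codes n M \<Upsilon> = {c. \<forall>v<M. sqnorm n (c v) \<le> real n * \<Upsilon>}"

definition avg_power_codes :: "nat \<Rightarrow> nat \<Rightarrow> real \<Rightarrow> (nat \<Rightarrow> nat \<Rightarrow> real) set" where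
  "avg_power_codes n M \<Upsilon> = {c. (\<Sum>v<M. sqnorm n (c v)) / real M \<le> real n * \<Upsilon>}"

definition eps_e :: "real \<Rightarrow> nat \<Rightarrow> nat \<Rightarrow> real \<Rightarrow> real" where
  "eps_e \<sigma> n M \<Upsilon> = (INF c \<in> equal_power_codes n M \<Upsilon>. error_prob \<sigma> n M c)"

definition eps_m :: "real \<Rightarrow> nat \<Rightarrow> nat \<Rightarrow> real \<Rightarrow> real" where
  "eps_m \<sigma> n M \<Upsilon> = (INF c \<in> max_power_codes n M \<Upsilon>. error_prob \<sigma> n M c)"

definition eps_a :: "real \<Rightarrow> nat \<Rightarrow> nat \<Rightarrow> real \<Rightarrow> real" where
  "eps_a \<sigma> n M \<Upsilon> = (INF c \<in> avg_power_codes n M \<Upsilon>. error_prob \<sigma> n M c)"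

end

theory Submission imports Defs "HOL-Probability.Distributions" begin

lemma gauss_eq: "\<sigma> > 0 \<Longrightarrow> gauss_pdf \<mu> \<sigma> y = normal_density \<mu> \<sigma> y"
  unfolding gauss_pdf_def normal_density_def
  by (simp add: real_sqrt_mult)

lemma gauss_nonneg: "\<sigma> > 0 \<Longrightarrow> gauss_pdf \<mu> \<sigma> y \<ge> 0"
  by (simp add: gauss_eq)

lemma gauss_meas[measurable]: "gauss_pdf \<mu> \<sigma> \<in> borel_measurable borel"
  unfolding gauss_pdf_def[abs_def] by measurable

lemma gauss_nn: "\<sigma> > 0 \<Longrightarrow> (\<integral>\<^sup>+t. ennreal (gauss_pdf \<mu> \<sigma> t) \<partial>lborel) = 1"
  by (simp add: gauss_eq nn_integral_eq_integral)

lemma awgn_meas[measurable]: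
  "(\<lambda>y. awgn_density \<sigma> m x y) \<in> borel_measurable (PiM {..<m} (\<lambda>_. lborel))"
  unfolding awgn_density_def by measurable

lemma awgn_nonneg: "\<sigma> > 0 \<Longrightarrow> awgn_density \<sigma> m x y \<ge> 0"
  unfolding awgn_density_def by (simp add: gauss_nonneg prod_nonneg)

lemma awgn_nn: assumes "\<sigma> > 0"
  shows "(\<integral>\<^sup>+y. ennreal (awgn_density \<sigma> m x y) \<partial>PiM {..<m} (\<lambda>_. lborel)) = 1"
proof -
  interpret product_sigma_finite "\<lambda>_. lborel" by standard
  have "(\<integral>\<^sup>+y. ennreal (awgn_density \<sigma> m x y) \<partial>PiM {..<m} (\<lambda>_. lborel))
     = (\<integral>\<^sup>+y. (\<Prod>i<m. ennreal (gauss_pdf (x i) \<sigma> (y i))) \<partial>PiM {..<m} (\<lambda>_. lborel))"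
    unfolding awgn_density_def using assms
    by (intro nn_integral_cong) (simp add: prod_ennreal gauss_nonneg)
  also have "\<dots> = (\<Prod>i<m. \<integral>\<^sup>+t. ennreal (gauss_pdf (x i) \<sigma> t) \<partial>lborel)"
    by (rule product_nn_integral_prod) auto
  also have "\<dots> = 1" using assms by (simp add: gauss_nn)
  finally show ?thesis .
qed

lemma awgn_int: assumes "\<sigma> > 0"
  shows "integrable (PiM {..<m} (\<lambda>_. lborel)) (awgn_density \<sigma> m x)"
  by (rule integrableI_nonneg) (auto simp: awgn_nonneg assms awgn_nn)

lemma dec_meas[measurable]:
  "(\<lambda>y. ml_decoder \<sigma> m M c y) \<in> measurable (PiM {..<m} (\<lambda>_. lborel)) (count_space UNIV)"
  unfolding ml_decoder_def
proof (rule measurable_Least, rule pred_intros_conj1', rule pred_intros_countable, rule pred_intros_imp')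
  fix i u
  show "Measurable.pred (PiM {..<m} (\<lambda>_. lborel)) (\<lambda>x. awgn_density \<sigma> m (c u) x \<le> awgn_density \<sigma> m (c i) x)"
    unfolding pred_def by (rule borel_measurable_le[OF awgn_meas awgn_meas])
qed

lemma dec_prop: assumes "M \<ge> 1"
  shows "ml_decoder \<sigma> m M c y < M \<and> (\<forall>u<M. awgn_density \<sigma> m (c u) y \<le> awgn_density \<sigma> m (c (ml_decoder \<sigma> m M c y)) y)"
proof -
  let ?f = "\<lambda>u. awgn_density \<sigma> m (c u) y"
  have "Max (?f ` {..<M}) \<in> ?f ` {..<M}" using assms by (intro Max_in) (auto simp: lessThan_empty_iff)
  then obtain v where v: "v < M" "?f v = Max (?f ` {..<M})" by auto
  have "\<forall>u<M. ?f u \<le> ?f v" using v by auto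
  with v have "\<exists>v. v < M \<and> (\<forall>u<M. ?f u \<le> ?f v)" by blast
  from LeastI_ex[OF this] show ?thesis unfolding ml_decoder_def .
qed

abbreviation PP :: "nat \<Rightarrow> (nat \<Rightarrow> real) measure" where
  "PP m \<equiv> PiM {..<m} (\<lambda>_. lborel)"

lemma err_formula: assumes s: "\<sigma> > 0" and M: "M \<ge> 1"
  shows "error_prob \<sigma> m M c =
    (real M - (\<integral>y. awgn_density \<sigma> m (c (ml_decoder \<sigma> m M c y)) y \<partial>PP m)) / real M"
proof -
  let ?D = "ml_decoder \<sigma> m M c"
  let ?w = "\<lambda>v. awgn_density \<sigma> m (c v)"
  let ?i = "\<lambda>v y. if ?D y = v then ?w v y else 0"
  have ii: "integrable (PP m) (?i v)" for v
    by (rule Bochner_Integration.integrable_bound[OF awgn_int[OF s, of m "c v"]])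
       (auto simp: awgn_nonneg[OF s])
  have w1: "(\<integral>y. ?w v y \<partial>PP m) = 1" for v
    by (subst integral_eq_nn_integral) (auto simp: awgn_nonneg[OF s] awgn_nn[OF s])
  have "(\<integral>y. (if ?D y \<noteq> v then 1 else 0) * ?w v y \<partial>PP m) = (\<integral>y. ?w v y - ?i v y \<partial>PP m)" for v
    by (intro Bochner_Integration.integral_cong) auto
  also have "\<dots> v = 1 - (\<integral>y. ?i v y \<partial>PP m)" for v
    by (subst Bochner_Integration.integral_diff) (auto intro: ii awgn_int[OF s] simp: w1)
  finally have e: "error_prob \<sigma> m M c = (\<Sum>v<M. 1 - (\<integral>y. ?i v y \<partial>PP m)) / real M"
    unfolding error_prob_def by simp
  have "(\<Sum>v<M. (\<integral>y. ?i v y \<partial>PP m)) = (\<integral>y. (\<Sum>v<M. ?i v y) \<partial>PP m)"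
    by (rule Bochner_Integration.integral_sum[symmetric]) (rule ii)
  also have "\<dots> = (\<integral>y. ?w (?D y) y \<partial>PP m)"
    using dec_prop[OF M] by (intro Bochner_Integration.integral_cong) (auto simp: sum.delta')
  finally show ?thesis unfolding e by (simp add: sum_subtractf)
qed

lemma awgn_Suc: "awgn_density \<sigma> (Suc m) x z = awgn_density \<sigma> m x z * gauss_pdf (x m) \<sigma> (z m)"
  unfolding awgn_density_def by simp

lemma awgn_upd: "awgn_density \<sigma> m (x(m := a)) (y(m := t)) = awgn_density \<sigma> m x y"
  unfolding awgn_density_def by (intro prod.cong) auto

lemma ext_ineq:
  assumes s: "\<sigma> > 0" and M: "M \<ge> 1"
  and c': "\<And>v. c' v = (c v)(n := a v)"
  shows "(\<integral>y. awgn_density \<sigma> n (c (ml_decoder \<sigma> n M c y)) y \<partial>PP n)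
     \<le> (\<integral>z. awgn_density \<sigma> (Suc n) (c' (ml_decoder \<sigma> (Suc n) M c' z)) z \<partial>PP (Suc n))"
proof -
  interpret product_sigma_finite "\<lambda>_. lborel" by standard
  let ?D = "ml_decoder \<sigma> n M c"
  let ?D' = "ml_decoder \<sigma> (Suc n) M c'"
  let ?g = "\<lambda>y. awgn_density \<sigma> n (c (?D y)) y"
  let ?h = "\<lambda>z. awgn_density \<sigma> (Suc n) (c' (?D' z)) z"
  have gm: "?g \<in> borel_measurable (PP n)"
    by (rule measurable_compose_countable'[where I=UNIV]) auto
  have hm: "?h \<in> borel_measurable (PP (Suc n))"
    by (rule measurable_compose_countable'[where I=UNIV]) auto
  have hm': "(\<lambda>z. ennreal (?h z)) \<in> borel_measurable (PiM (insert n {..<n}) (\<lambda>_. lborel))"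
    using hm by (simp add: lessThan_Suc)
  have "(\<integral>\<^sup>+z. ennreal (?h z) \<partial>PP (Suc n)) \<le> (\<integral>\<^sup>+z. (\<Sum>v<M. ennreal (awgn_density \<sigma> (Suc n) (c' v) z)) \<partial>PP (Suc n))"
  proof (intro nn_integral_mono)
    fix z
    have "ennreal (?h z) = (\<Sum>v\<in>{?D' z}. ennreal (awgn_density \<sigma> (Suc n) (c' v) z))" by simp
    also have "\<dots> \<le> (\<Sum>v<M. ennreal (awgn_density \<sigma> (Suc n) (c' v) z))"
      using dec_prop[OF M, of \<sigma> "Suc n" c' z] by (intro sum_mono2) auto
    finally show "ennreal (?h z) \<le> (\<Sum>v<M. ennreal (awgn_density \<sigma> (Suc n) (c' v) z))" .
  qed
  also have "\<dots> = (\<Sum>v<M. (\<integral>\<^sup>+z. ennreal (awgn_density \<sigma> (Suc n) (c' v) z) \<partial>PP (Suc n)))"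
    by (rule nn_integral_sum) auto
  also have "\<dots> = of_nat M" by (simp add: awgn_nn[OF s])
  finally have hle: "(\<integral>\<^sup>+z. ennreal (?h z) \<partial>PP (Suc n)) \<le> of_nat M" .
  have hfin: "(\<integral>\<^sup>+z. ennreal (?h z) \<partial>PP (Suc n)) < \<infinity>"
    using hle of_nat_less_top[of M] by (simp add: le_less_trans)
  have "(\<integral>\<^sup>+y. ennreal (?g y) \<partial>PP n) \<le> (\<integral>\<^sup>+y. (\<integral>\<^sup>+t. ennreal (?h (y(n := t))) \<partial>lborel) \<partial>PP n)"
  proof (intro nn_integral_mono)
    fix y
    let ?v = "?D y"
    have "ennreal (?g y) = (\<integral>\<^sup>+t. ennreal (?g y) * ennreal (gauss_pdf (a ?v) \<sigma> t) \<partial>lborel)"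
      by (subst nn_integral_cmult) (auto simp: gauss_nn[OF s])
    also have "\<dots> \<le> (\<integral>\<^sup>+t. ennreal (?h (y(n := t))) \<partial>lborel)"
    proof (intro nn_integral_mono)
      fix t
      have "?g y * gauss_pdf (a ?v) \<sigma> t = awgn_density \<sigma> (Suc n) (c' ?v) (y(n := t))"
        by (simp add: awgn_Suc c' awgn_upd)
      also have "\<dots> \<le> ?h (y(n := t))"
        using dec_prop[OF M, of \<sigma> "Suc n" c' "y(n := t)"] dec_prop[OF M, of \<sigma> n c y] by auto
      finally show "ennreal (?g y) * ennreal (gauss_pdf (a ?v) \<sigma> t) \<le> ennreal (?h (y(n := t)))"
        by (simp add: ennreal_mult'[symmetric] awgn_nonneg[OF s] ennreal_leI)
    qed
    finally show "ennreal (?g y) \<le> (\<integral>\<^sup>+t. ennreal (?h (y(n := t))) \<partial>lborel)" .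
  qed
  also have "\<dots> = (\<integral>\<^sup>+z. ennreal (?h z) \<partial>PiM (insert n {..<n}) (\<lambda>_. lborel))"
    by (rule product_nn_integral_insert[symmetric]) (auto intro: hm')
  also have "\<dots> = (\<integral>\<^sup>+z. ennreal (?h z) \<partial>PP (Suc n))" by (simp add: lessThan_Suc)
  finally have le: "(\<integral>\<^sup>+y. ennreal (?g y) \<partial>PP n) \<le> (\<integral>\<^sup>+z. ennreal (?h z) \<partial>PP (Suc n))" .
  show ?thesis
    apply (subst integral_eq_nn_integral[OF gm])
     apply (simp add: awgn_nonneg[OF s])
    apply (subst integral_eq_nn_integral[OF hm])
     apply (simp add: awgn_nonneg[OF s])
    using le hfin by (intro enn2real_mono) auto
qed

lemma err_nonneg: assumes s: "\<sigma> > 0" shows "error_prob \<sigma> m M c \<ge> 0"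
  unfolding error_prob_def
proof (rule divide_nonneg_nonneg)
  show "0 \<le> (\<Sum>v<M. LINT y|PP m. (if ml_decoder \<sigma> m M c y \<noteq> v then 1 else 0) * awgn_density \<sigma> m (c v) y)"
  proof (rule sum_nonneg)
    fix v
    show "0 \<le> (LINT y|PP m. (if ml_decoder \<sigma> m M c y \<noteq> v then 1 else 0) * awgn_density \<sigma> m (c v) y)"
      by (rule integral_nonneg_AE, rule AE_I2, rule mult_nonneg_nonneg) (simp, rule awgn_nonneg[OF s])
  qed
  show "0 \<le> real M" by (rule of_nat_0_le_iff)
qed

theorem mainTheorem1:
  fixes \<sigma> \<Upsilon> :: real and n M :: nat
  assumes "\<sigma> > 0" and "n \<ge> 1" and "M \<ge> 2" and "\<Upsilon> > 0"
  shows "eps_m \<sigma> n M \<Upsilon> \<ge> eps_e \<sigma> (n + 1) M (real n * \<Upsilon> / real (n + 1))"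
proof -
  have s: "\<sigma> > 0" and M: "M \<ge> 1" using assms by auto
  have ne: "max_power_codes n M \<Upsilon> \<noteq> {}"
  proof -
    have "(\<lambda>_ _. 0) \<in> max_power_codes n M \<Upsilon>"
      using assms by (simp add: max_power_codes_def sqnorm_def)
    then show ?thesis by blast
  qed
  show ?thesis unfolding eps_m_def
  proof (rule cINF_greatest[OF ne])
    fix c assume c: "c \<in> max_power_codes n M \<Upsilon>"
    define a where "a v = sqrt (real n * \<Upsilon> - sqnorm n (c v))" for v
    define c' where "c' v = (c v)(n := a v)" for v
    have sq: "sqnorm (n + 1) (c' v) = real (n + 1) * (real n * \<Upsilon> / real (n + 1))" if "v < M" for v
    proof -
      have le: "sqnorm n (c v) \<le> real n * \<Upsilon>" using c that by (simp add: max_power_codes_def)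
      have "sqnorm (n + 1) (c' v) = sqnorm n (c v) + (a v)^2"
        unfolding sqnorm_def c'_def by (simp add: lessThan_Suc)
      also have "\<dots> = real n * \<Upsilon>" using le by (simp add: a_def)
      finally show ?thesis by simp
    qed
    have c'in: "c' \<in> equal_power_codes (n + 1) M (real n * \<Upsilon> / real (n + 1))"
      using sq by (simp add: equal_power_codes_def)
    have "eps_e \<sigma> (n + 1) M (real n * \<Upsilon> / real (n + 1)) \<le> error_prob \<sigma> (n + 1) M c'"
      unfolding eps_e_def
      by (rule cINF_lower[OF _ c'in]) (auto intro: bdd_belowI[where m=0] err_nonneg[OF s])
    also have "\<dots> \<le> error_prob \<sigma> n M c"
    proof -
      have I: "(\<integral>y. awgn_density \<sigma> n (c (ml_decoder \<sigma> n M c y)) y \<partial>PP n)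
       \<le> (\<integral>z. awgn_density \<sigma> (Suc n) (c' (ml_decoder \<sigma> (Suc n) M c' z)) z \<partial>PP (Suc n))"
        by (rule ext_ineq[OF s M]) (rule c'_def)
      have "error_prob \<sigma> (Suc n) M c' \<le> error_prob \<sigma> n M c"
        unfolding err_formula[OF s M, of "Suc n"] err_formula[OF s M, of n]
        by (rule divide_right_mono) (use I in linarith, simp)
      then show ?thesis by simp
    qed
    finally show "eps_e \<sigma> (n + 1) M (real n * \<Upsilon> / real (n + 1)) \<le> error_prob \<sigma> n M c" .
  qed
qed

end
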